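(* Let $f:\mathbb{R}^d\to\mathbb{R}$ be convex and $L$-smooth ($L>0$) with a unique minimizer $\mathbf{x}^\star$. Let $\sigma_n\ge0$ with $\sigma_n\to0$. Then there is $N$ such that $f_{\sigma_n}$ has a minimizer for all $n\ge N$, and for any choice of minimizers $\mathbf{x}^\star_{\sigma_n}$ of $f_{\sigma_n}$ ($n\ge N$), $\mathbf{x}^\star_{\sigma_n}\to\mathbf{x}^\star$.
   Context: For $\sigma>0$, $f_\sigma(\mathbf{x})=\pi^{-d/2}\int_{\mathbb{R}^d} f(\mathbf{x}+\sigma\mathbf{u})\,e^{-\|\mathbf{u}\|_2^2}\,d\mathbf{u}$, and $f_0=f$. $L$-smooth means differentiable with $L$-Lipschitz gradient. *)

theory Defs
  imports "HOL-Analysis.Analysis"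
begin

definition gauss_smooth :: "real \<Rightarrow> ('a::euclidean_space \<Rightarrow> real) \<Rightarrow> 'a \<Rightarrow> real" where
  "gauss_smooth \<sigma> f x =
     (if \<sigma> = 0 then f x
      else pi powr (- real DIM('a) / 2) *
           (\<integral>u. f (x + \<sigma> *\<^sub>R u) * exp (- (norm u)\<^sup>2) \<partial>lborel))"

definition L_smooth :: "real \<Rightarrow> ('a::euclidean_space \<Rightarrow> real) \<Rightarrow> bool" where
  "L_smooth L f \<longleftrightarrow> (\<exists>g. (\<forall>x. (f has_derivative (\<lambda>h. g x \<bullet> h)) (at x)) \<and>
                         (\<forall>x y. norm (g x - g y) \<le> L * norm (x - y)))"

definition is_minimizer :: "('a \<Rightarrow> real) \<Rightarrow> 'a \<Rightarrow> bool" where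
  "is_minimizer f x \<longleftrightarrow> (\<forall>y. f x \<le> f y)"

end

theory Submission
  imports Defs "HOL-Probability.Distributions"
begin

lemma gauss1_int: "integrable lborel (\<lambda>t::real. (1 + t\<^sup>2) * exp (- t\<^sup>2))"
proof -
  define s where "s = sqrt (1/2::real)"
  have s2: "s\<^sup>2 = 1/2" unfolding s_def by simp
  have nd: "normal_density 0 s t = 1 / sqrt pi * exp (- t\<^sup>2)" for t
    unfolding normal_density_def s2 by simp
  have i1: "integrable lborel (\<lambda>t. normal_density 0 s t * (t - 0)^0 + normal_density 0 s t * (t - 0)^2)"
    by (rule Bochner_Integration.integrable_add; rule integrable_normal_moment) (auto simp: s_def)
  have i2: "integrable lborel (\<lambda>t. sqrt pi * (normal_density 0 s t * (t - 0)^0 + normal_density 0 s t * (t - 0)^2))"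
    using i1 by (rule Bochner_Integration.integrable_mult_right)
  have "(\<lambda>t. sqrt pi * (normal_density 0 s t * (t - 0)^0 + normal_density 0 s t * (t - 0)^2)) = (\<lambda>t. (1 + t\<^sup>2) * exp (- t\<^sup>2))"
    unfolding nd by (rule ext) (simp add: field_simps)
  then show ?thesis using i2 by metis
qed

lemma one_plus_sum_le_prod:
  fixes a :: "'b \<Rightarrow> real"
  assumes "finite I" "\<And>i. i \<in> I \<Longrightarrow> a i \<ge> 0"
  shows "1 + sum a I \<le> (\<Prod>i\<in>I. 1 + a i)"
  using assms
proof (induction I rule: finite_induct)
  case empty then show ?case by simp
next
  case (insert x F)
  have h: "1 + sum a F \<le> (\<Prod>i\<in>F. 1 + a i)" using insert by auto
  have ax: "a x \<ge> 0" using insert by auto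
  have "0 \<le> sum a F" using insert by (auto intro: sum_nonneg)
  have "1 + sum a (insert x F) = (1 + sum a F) + a x" using insert by simp
  also have "\<dots> \<le> (1 + a x) * (1 + sum a F)" using ax \<open>0 \<le> sum a F\<close> by (simp add: algebra_simps)
  also have "\<dots> \<le> (1 + a x) * (\<Prod>i\<in>F. 1 + a i)" using h ax by (intro mult_left_mono) auto
  finally show ?case using insert by simp
qed

lemma gauss_int: "integrable lborel (\<lambda>x::'a::euclidean_space. (1 + (norm x)\<^sup>2) * exp (- (norm x)\<^sup>2))"
proof (subst integrable_iff_bounded, intro conjI)
  show "(\<lambda>x::'a. (1 + (norm x)\<^sup>2) * exp (- (norm x)\<^sup>2)) \<in> borel_measurable lborel"
    by measurable
  define h where "h = (\<lambda>t::real. (1 + t\<^sup>2) * exp (- t\<^sup>2))"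
  have hnn: "0 \<le> h t" for t unfolding h_def by simp
  have hm[measurable]: "h \<in> borel_measurable borel" unfolding h_def by measurable
  have hfin: "(\<integral>\<^sup>+t. ennreal (h t) \<partial>lborel) < \<infinity>"
    using gauss1_int hnn unfolding h_def integrable_iff_bounded by (simp add: abs_of_nonneg)
  have pt: "(1 + (norm x)\<^sup>2) * exp (- (norm x)\<^sup>2) \<le> (\<Prod>b\<in>Basis. h (x \<bullet> b))" for x :: 'a
  proof -
    have nx: "(norm x)\<^sup>2 = (\<Sum>b\<in>Basis. (x \<bullet> b)\<^sup>2)"
      unfolding power2_norm_eq_inner by (subst euclidean_inner) (simp add: power2_eq_square)
    have e: "exp (- (norm x)\<^sup>2) = (\<Prod>b\<in>Basis. exp (- (x \<bullet> b)\<^sup>2))"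
      unfolding nx by (simp add: exp_sum sum_negf[symmetric])
    have "(1 + (norm x)\<^sup>2) * exp (- (norm x)\<^sup>2) \<le> (\<Prod>b\<in>Basis. 1 + (x \<bullet> b)\<^sup>2) * (\<Prod>b\<in>Basis. exp (- (x \<bullet> b)\<^sup>2))"
      unfolding e apply (rule mult_right_mono) unfolding nx
      by (rule one_plus_sum_le_prod) (auto intro: prod_nonneg)
    also have "\<dots> = (\<Prod>b\<in>Basis. h (x \<bullet> b))" unfolding h_def prod.distrib by simp
    finally show ?thesis .
  qed
  have "(\<integral>\<^sup>+x. ennreal (norm ((1 + (norm (x::'a))\<^sup>2) * exp (- (norm x)\<^sup>2))) \<partial>lborel)
      \<le> (\<integral>\<^sup>+x. (\<Prod>b\<in>Basis. ennreal (h ((x::'a) \<bullet> b))) \<partial>lborel)"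
  proof (rule nn_integral_mono)
    fix x :: 'a
    have "ennreal (norm ((1 + (norm x)\<^sup>2) * exp (- (norm x)\<^sup>2))) = ennreal ((1 + (norm x)\<^sup>2) * exp (- (norm x)\<^sup>2))"
      by simp
    also have "\<dots> \<le> ennreal (\<Prod>b\<in>Basis. h (x \<bullet> b))" using pt by (rule ennreal_leI)
    also have "\<dots> = (\<Prod>b\<in>Basis. ennreal (h (x \<bullet> b)))" by (simp add: prod_ennreal hnn)
    finally show "ennreal (norm ((1 + (norm x)\<^sup>2) * exp (- (norm x)\<^sup>2))) \<le> (\<Prod>b\<in>Basis. ennreal (h (x \<bullet> b)))" .
  qed
  also have "\<dots> = (\<Prod>(b::'a)\<in>Basis. (\<integral>\<^sup>+t. ennreal (h t) \<partial>lborel))"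
    by (rule nn_integral_lborel_prod) auto
  also have "\<dots> < \<infinity>" using hfin by (simp add: less_top[symmetric] ennreal_prod_eq_top power_eq_top_ennreal)
  finally show "(\<integral>\<^sup>+x. ennreal (norm ((1 + (norm (x::'a))\<^sup>2) * exp (- (norm x)\<^sup>2))) \<partial>lborel) < \<infinity>" .
qed

lemma line_deriv:
  fixes f :: "'a::euclidean_space \<Rightarrow> real"
  assumes D: "\<And>x. (f has_derivative (\<lambda>h. g x \<bullet> h)) (at x)"
  shows "((\<lambda>t. f (x + t *\<^sub>R v)) has_real_derivative (g (x + t *\<^sub>R v) \<bullet> v)) (at t)"
proof -
  have l: "((\<lambda>t. x + t *\<^sub>R v) has_derivative (\<lambda>s. s *\<^sub>R v)) (at t)"
    by (auto intro!: derivative_eq_intros)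
  have "((\<lambda>t. f (x + t *\<^sub>R v)) has_derivative (\<lambda>s. g (x + t *\<^sub>R v) \<bullet> (s *\<^sub>R v))) (at t)"
    using has_derivative_compose[OF l D] by (simp add: o_def)
  then show ?thesis
    by (simp add: has_field_derivative_def mult_commute_abs)
qed

lemma descent:
  fixes f :: "'a::euclidean_space \<Rightarrow> real"
  assumes D: "\<And>x. (f has_derivative (\<lambda>h. g x \<bullet> h)) (at x)"
    and Lip: "\<And>x y. norm (g x - g y) \<le> L * norm (x - y)"
  shows "\<bar>f (x + v) - f x - g x \<bullet> v\<bar> \<le> L / 2 * (norm v)\<^sup>2"
proof -
  have key: "\<bar>g (x + t *\<^sub>R v) \<bullet> v - g x \<bullet> v\<bar> \<le> L * t * (norm v)\<^sup>2" if "0 \<le> t" for t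
  proof -
    have "\<bar>g (x + t *\<^sub>R v) \<bullet> v - g x \<bullet> v\<bar> = \<bar>(g (x + t *\<^sub>R v) - g x) \<bullet> v\<bar>" by (simp add: inner_diff_left)
    also have "\<dots> \<le> norm (g (x + t *\<^sub>R v) - g x) * norm v" by (rule Cauchy_Schwarz_ineq2)
    also have "\<dots> \<le> L * norm (t *\<^sub>R v) * norm v" using Lip[of "x + t *\<^sub>R v" x] by (intro mult_right_mono) auto
    also have "\<dots> = L * t * (norm v)\<^sup>2" using that by (simp add: power2_eq_square)
    finally show ?thesis .
  qed
  define p where "p = (\<lambda>t. f (x + t *\<^sub>R v) - t * (g x \<bullet> v) - L / 2 * t\<^sup>2 * (norm v)\<^sup>2)"
  define q where "q = (\<lambda>t. f (x + t *\<^sub>R v) - t * (g x \<bullet> v) + L / 2 * t\<^sup>2 * (norm v)\<^sup>2)"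
  have dp: "(p has_real_derivative (g (x + t *\<^sub>R v) \<bullet> v - g x \<bullet> v - L * t * (norm v)\<^sup>2)) (at t)" for t
    unfolding p_def by (auto intro!: derivative_eq_intros line_deriv[OF D])
  have dq: "(q has_real_derivative (g (x + t *\<^sub>R v) \<bullet> v - g x \<bullet> v + L * t * (norm v)\<^sup>2)) (at t)" for t
    unfolding q_def by (auto intro!: derivative_eq_intros line_deriv[OF D])
  have "p 1 \<le> p 0"
    by (rule DERIV_nonpos_imp_nonincreasing[of 0 1 p]) (use dp key in fastforce)+
  moreover have "q 0 \<le> q 1"
    by (rule DERIV_nonneg_imp_nondecreasing[of 0 1 q]) (use dq key in fastforce)+
  ultimately have "f (x + v) - f x - g x \<bullet> v \<le> L / 2 * (norm v)\<^sup>2" "- (L / 2 * (norm v)\<^sup>2) \<le> f (x + v) - f x - g x \<bullet> v"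
    unfolding p_def q_def by simp_all
  then show ?thesis unfolding abs_le_iff by linarith
qed

lemma growth:
  fixes f :: "'a::euclidean_space \<Rightarrow> real"
  assumes cvx: "convex_on UNIV f" and cont: "continuous_on UNIV f"
    and mn: "is_minimizer f xs" and uq: "\<And>y. is_minimizer f y \<Longrightarrow> y = xs"
    and e: "0 < e"
  shows "\<exists>d>0. \<forall>x. e \<le> norm (x - xs) \<longrightarrow> f xs + d * norm (x - xs) / e \<le> f x"
proof -
  have "\<exists>z\<in>sphere xs e. \<forall>y\<in>sphere xs e. f z \<le> f y"
    using e by (intro continuous_attains_inf continuous_on_subset[OF cont]) auto
  then obtain z where z: "z \<in> sphere xs e" and zmin: "\<And>y. y \<in> sphere xs e \<Longrightarrow> f z \<le> f y" by blast
  have "z \<noteq> xs" using z e by auto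
  then have "\<not> is_minimizer f z" using uq by blast
  then obtain w where "f w < f z" unfolding is_minimizer_def by (auto simp: not_le)
  moreover have "f xs \<le> f w" using mn unfolding is_minimizer_def by auto
  ultimately have dpos: "f z - f xs > 0" by simp
  show ?thesis
  proof (intro exI[of _ "f z - f xs"] conjI allI impI dpos)
    fix x assume r: "e \<le> norm (x - xs)"
    define r where "r = norm (x - xs)"
    have rpos: "r > 0" using r e unfolding r_def by auto
    define t where "t = e / r"
    have t0: "0 \<le> t" "t \<le> 1" "t > 0" using r e rpos unfolding t_def r_def by auto
    define y where "y = (1 - t) *\<^sub>R xs + t *\<^sub>R x"
    have "y - xs = t *\<^sub>R (x - xs)" unfolding y_def by (simp add: algebra_simps)
    then have "norm (y - xs) = e" using t0 rpos e unfolding t_def r_def by simp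
    then have ys: "y \<in> sphere xs e" by (simp add: dist_norm norm_minus_commute)
    have "f y \<le> (1 - t) * f xs + t * f x"
      unfolding y_def using t0 by (intro convex_onD[OF cvx]) auto
    with zmin[OF ys] have "f z - f xs \<le> t * (f x - f xs)" by (simp add: algebra_simps)
    then have "(f z - f xs) / t \<le> f x - f xs" using t0 by (simp add: divide_le_eq mult.commute)
    moreover have "(f z - f xs) / t = (f z - f xs) * r / e" unfolding t_def using e rpos by simp
    ultimately show "f xs + (f z - f xs) * norm (x - xs) / e \<le> f x" unfolding r_def by simp
  qed
qed

lemma lborel_reflect:
  fixes h :: "'a::euclidean_space \<Rightarrow> real"
  assumes [measurable]: "h \<in> borel_measurable borel"
  shows "(\<integral>u. h (- u) \<partial>lborel) = (\<integral>u. h u \<partial>lborel)"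
proof -
  have "lborel = density (distr lborel borel (\<lambda>x::'a. 0 + (-1) *\<^sub>R x)) (\<lambda>_. \<bar>-1::real\<bar> ^ DIM('a))"
    by (rule lborel_affine) simp
  then have eq: "(lborel :: 'a measure) = distr lborel borel uminus"
    by (simp add: density_1)
  have "(\<integral>u. h u \<partial>lborel) = (\<integral>u. h u \<partial>(distr lborel borel uminus))"
    by (subst eq) simp
  also have "\<dots> = (\<integral>u. h (- u) \<partial>lborel)"
    by (rule integral_distr) auto
  finally show ?thesis by simp
qed

lemma gauss_pos: "(\<integral>u. exp (- (norm (u::'a::euclidean_space))\<^sup>2) \<partial>lborel) > 0"
proof -
  have int: "integrable lborel (\<lambda>u::'a. exp (- (norm u)\<^sup>2))"
    by (rule Bochner_Integration.integrable_bound[OF gauss_int]) (auto simp: mult_le_cancel_right1)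
  have "(\<integral>u. exp (- (norm (u::'a))\<^sup>2) \<partial>lborel) \<ge> 0" by (intro Bochner_Integration.integral_nonneg) auto
  moreover have "(\<integral>u. exp (- (norm (u::'a))\<^sup>2) \<partial>lborel) \<noteq> 0"
  proof
    assume "(\<integral>u. exp (- (norm (u::'a))\<^sup>2) \<partial>lborel) = 0"
    then have "AE u in lborel. exp (- (norm (u::'a))\<^sup>2) = 0"
      using integral_nonneg_eq_0_iff_AE[OF int] by auto
    then have "AE u in (lborel::'a measure). False" by simp
    then have "emeasure (lborel::'a measure) (space lborel) = 0"
      using ae_filter_eq_bot_iff trivial_limit_def by metis
    then show False by simp
  qed
  ultimately show ?thesis by linarith
qed

context
  fixes f :: "'a::euclidean_space \<Rightarrow> real" and g :: "'a \<Rightarrow> 'a" and L :: real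
  assumes D: "\<And>x. (f has_derivative (\<lambda>h. g x \<bullet> h)) (at x)"
    and Lip: "\<And>x y. norm (g x - g y) \<le> L * norm (x - y)"
    and Lpos: "L > 0"
    and cvx: "convex_on UNIV f"
begin

lemma f_cont: "continuous_on UNIV f"
  using D by (meson continuous_at_imp_continuous_on has_derivative_continuous)

lemma f_meas[measurable]: "f \<in> borel_measurable borel"
  by (rule borel_measurable_continuous_onI[OF f_cont])

lemma integ: "integrable lborel (\<lambda>u. f (x + s *\<^sub>R u) * exp (- (norm u)\<^sup>2))"
proof (rule Bochner_Integration.integrable_bound)
  define C where "C = \<bar>f x\<bar> + norm (g x) * \<bar>s\<bar> + L / 2 * s\<^sup>2"
  show "integrable lborel (\<lambda>u::'a. C * ((1 + (norm u)\<^sup>2) * exp (- (norm u)\<^sup>2)))"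
    using gauss_int by (rule Bochner_Integration.integrable_mult_right)
  show "(\<lambda>u. f (x + s *\<^sub>R u) * exp (- (norm u)\<^sup>2)) \<in> borel_measurable lborel" by measurable
  show "AE u in lborel. norm (f (x + s *\<^sub>R u) * exp (- (norm u)\<^sup>2)) \<le> norm (C * ((1 + (norm u)\<^sup>2) * exp (- (norm u)\<^sup>2)))"
  proof (rule AE_I2)
    fix u :: 'a
    have nu: "norm u \<le> 1 + (norm u)\<^sup>2"
    proof -
      have "0 \<le> (norm u - 1)\<^sup>2" by simp
      then have a: "norm u * 2 \<le> 1 + norm u * norm u" by (simp add: power2_eq_square algebra_simps)
      have b: "0 \<le> norm u" by simp
      show ?thesis unfolding power2_eq_square using a b by linarith
    qed
    have "\<bar>f (x + s *\<^sub>R u) - f x - g x \<bullet> (s *\<^sub>R u)\<bar> \<le> L / 2 * (norm (s *\<^sub>R u))\<^sup>2"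
      by (rule descent[OF D Lip])
    moreover have "\<bar>g x \<bullet> (s *\<^sub>R u)\<bar> \<le> norm (g x) * (\<bar>s\<bar> * norm u)"
      using Cauchy_Schwarz_ineq2[of "g x" "s *\<^sub>R u"] by simp
    moreover have "L / 2 * (norm (s *\<^sub>R u))\<^sup>2 = L / 2 * s\<^sup>2 * (norm u)\<^sup>2"
      by (simp add: power_mult_distrib)
    moreover have "norm (g x) * (\<bar>s\<bar> * norm u) = norm (g x) * \<bar>s\<bar> * norm u" by simp
    moreover have "\<bar>f x\<bar> \<ge> f x" "\<bar>f x\<bar> \<ge> - f x" by auto
    ultimately have "\<bar>f (x + s *\<^sub>R u)\<bar> \<le> \<bar>f x\<bar> + norm (g x) * \<bar>s\<bar> * norm u + L / 2 * s\<^sup>2 * (norm u)\<^sup>2"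
      unfolding abs_le_iff by linarith
    also have "\<dots> \<le> C * (1 + (norm u)\<^sup>2)"
    proof -
      have t1: "\<bar>f x\<bar> \<le> \<bar>f x\<bar> * (1 + (norm u)\<^sup>2)" by (simp add: algebra_simps)
      have t2: "norm (g x) * \<bar>s\<bar> * norm u \<le> norm (g x) * \<bar>s\<bar> * (1 + (norm u)\<^sup>2)"
        using nu by (intro mult_left_mono) auto
      have t3: "L / 2 * s\<^sup>2 * (norm u)\<^sup>2 \<le> L / 2 * s\<^sup>2 * (1 + (norm u)\<^sup>2)"
        using Lpos by (intro mult_left_mono) auto
      have "C * (1 + (norm u)\<^sup>2) = \<bar>f x\<bar> * (1 + (norm u)\<^sup>2) + norm (g x) * \<bar>s\<bar> * (1 + (norm u)\<^sup>2) + L / 2 * s\<^sup>2 * (1 + (norm u)\<^sup>2)"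
        unfolding C_def by (simp add: distrib_right)
      then show ?thesis using t1 t2 t3 by linarith
    qed
    finally have "\<bar>f (x + s *\<^sub>R u)\<bar> \<le> C * (1 + (norm u)\<^sup>2)" .
    then have "\<bar>f (x + s *\<^sub>R u)\<bar> * exp (- (norm u)\<^sup>2) \<le> C * (1 + (norm u)\<^sup>2) * exp (- (norm u)\<^sup>2)"
      by (intro mult_right_mono) auto
    moreover have "C \<ge> 0" unfolding C_def using Lpos by auto
    ultimately show "norm (f (x + s *\<^sub>R u) * exp (- (norm u)\<^sup>2)) \<le> norm (C * ((1 + (norm u)\<^sup>2) * exp (- (norm u)\<^sup>2)))"
      by (simp add: abs_mult mult.assoc)
  qed
qed

end

lemma gauss_int0: "integrable lborel (\<lambda>u::'a::euclidean_space. exp (- (norm u)\<^sup>2))"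
  by (rule Bochner_Integration.integrable_bound[OF gauss_int]) (auto simp: mult_le_cancel_right1)

lemma gauss_int2: "integrable lborel (\<lambda>u::'a::euclidean_space. (norm u)\<^sup>2 * exp (- (norm u)\<^sup>2))"
  by (rule Bochner_Integration.integrable_bound[OF gauss_int]) (auto intro!: mult_right_mono)

context
  fixes f :: "'a::euclidean_space \<Rightarrow> real" and g :: "'a \<Rightarrow> 'a" and L :: real
  assumes D: "\<And>x. (f has_derivative (\<lambda>h. g x \<bullet> h)) (at x)"
    and Lip: "\<And>x y. norm (g x - g y) \<le> L * norm (x - y)"
    and Lpos: "L > 0"
    and cvx: "convex_on UNIV f"
begin

lemma integ': "integrable lborel (\<lambda>u. f (x + s *\<^sub>R u) * exp (- (norm u)\<^sup>2))"
  by (rule integ[OF D Lip Lpos cvx])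

lemma meas'[measurable]: "f \<in> borel_measurable borel"
  by (rule f_meas[OF D Lip Lpos cvx])

lemma reflect_S: "(\<integral>u. f (x + s *\<^sub>R u) * exp (- (norm u)\<^sup>2) \<partial>lborel) = (\<integral>u. f (x - s *\<^sub>R u) * exp (- (norm u)\<^sup>2) \<partial>lborel)"
proof -
  have "(\<integral>u. f (x + s *\<^sub>R u) * exp (- (norm u)\<^sup>2) \<partial>lborel) = (\<integral>u. f (x + s *\<^sub>R (- u)) * exp (- (norm (- u))\<^sup>2) \<partial>lborel)"
    by (rule lborel_reflect[symmetric]) measurable
  then show ?thesis by simp
qed

lemma S_sym: "2 * (\<integral>u. f (x + s *\<^sub>R u) * exp (- (norm u)\<^sup>2) \<partial>lborel) = (\<integral>u. (f (x + s *\<^sub>R u) + f (x - s *\<^sub>R u)) * exp (- (norm u)\<^sup>2) \<partial>lborel)"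
proof -
  have i2: "integrable lborel (\<lambda>u. f (x - s *\<^sub>R u) * exp (- (norm u)\<^sup>2))"
    using integ'[of x "- s"] by simp
  have "(\<integral>u. (f (x + s *\<^sub>R u) + f (x - s *\<^sub>R u)) * exp (- (norm u)\<^sup>2) \<partial>lborel)
     = (\<integral>u. f (x + s *\<^sub>R u) * exp (- (norm u)\<^sup>2) + f (x - s *\<^sub>R u) * exp (- (norm u)\<^sup>2) \<partial>lborel)"
    by (simp add: distrib_right)
  also have "\<dots> = (\<integral>u. f (x + s *\<^sub>R u) * exp (- (norm u)\<^sup>2) \<partial>lborel) + (\<integral>u. f (x - s *\<^sub>R u) * exp (- (norm u)\<^sup>2) \<partial>lborel)"
    by (rule Bochner_Integration.integral_add[OF integ' i2])
  finally show ?thesis using reflect_S[of x s] by simp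
qed

lemma S_lower: "f x * (\<integral>u. exp (- (norm (u::'a))\<^sup>2) \<partial>lborel) \<le> (\<integral>u. f (x + s *\<^sub>R u) * exp (- (norm u)\<^sup>2) \<partial>lborel)"
proof -
  have i2: "integrable lborel (\<lambda>u. f (x - s *\<^sub>R u) * exp (- (norm u)\<^sup>2))"
    using integ'[of x "- s"] by simp
  have "2 * (f x * (\<integral>u. exp (- (norm (u::'a))\<^sup>2) \<partial>lborel)) = (\<integral>u. 2 * f x * exp (- (norm (u::'a))\<^sup>2) \<partial>lborel)"
    by simp
  also have "\<dots> \<le> (\<integral>u. (f (x + s *\<^sub>R u) + f (x - s *\<^sub>R u)) * exp (- (norm u)\<^sup>2) \<partial>lborel)"
  proof (rule integral_mono)
    show "integrable lborel (\<lambda>u::'a. 2 * f x * exp (- (norm u)\<^sup>2))"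
      using gauss_int0 by (rule Bochner_Integration.integrable_mult_right)
    show "integrable lborel (\<lambda>u. (f (x + s *\<^sub>R u) + f (x - s *\<^sub>R u)) * exp (- (norm u)\<^sup>2))"
      unfolding distrib_right by (rule Bochner_Integration.integrable_add[OF integ' i2])
    fix u :: 'a
    have "f ((1 - 1/2) *\<^sub>R (x + s *\<^sub>R u) + (1/2) *\<^sub>R (x - s *\<^sub>R u)) \<le> (1 - 1/2) * f (x + s *\<^sub>R u) + (1/2) * f (x - s *\<^sub>R u)"
      by (rule convex_onD[OF cvx]) auto
    moreover have "(1 - 1/2) *\<^sub>R (x + s *\<^sub>R u) + (1/2) *\<^sub>R (x - s *\<^sub>R u) = x"
      by (simp add: algebra_simps flip: scaleR_add_left)
    ultimately have "2 * f x \<le> f (x + s *\<^sub>R u) + f (x - s *\<^sub>R u)" by simp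
    then show "2 * f x * exp (- (norm u)\<^sup>2) \<le> (f (x + s *\<^sub>R u) + f (x - s *\<^sub>R u)) * exp (- (norm u)\<^sup>2)"
      by (intro mult_right_mono) auto
  qed
  also have "\<dots> = 2 * (\<integral>u. f (x + s *\<^sub>R u) * exp (- (norm u)\<^sup>2) \<partial>lborel)"
    by (rule S_sym[symmetric])
  finally show ?thesis by simp
qed

lemma S_upper: "(\<integral>u. f (x + s *\<^sub>R u) * exp (- (norm u)\<^sup>2) \<partial>lborel)
   \<le> f x * (\<integral>u. exp (- (norm (u::'a))\<^sup>2) \<partial>lborel) + L / 2 * s\<^sup>2 * (\<integral>u. (norm (u::'a))\<^sup>2 * exp (- (norm u)\<^sup>2) \<partial>lborel)"
proof -
  have i2: "integrable lborel (\<lambda>u. f (x - s *\<^sub>R u) * exp (- (norm u)\<^sup>2))"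
    using integ'[of x "- s"] by simp
  have "2 * (\<integral>u. f (x + s *\<^sub>R u) * exp (- (norm u)\<^sup>2) \<partial>lborel) = (\<integral>u. (f (x + s *\<^sub>R u) + f (x - s *\<^sub>R u)) * exp (- (norm u)\<^sup>2) \<partial>lborel)"
    by (rule S_sym)
  also have "\<dots> \<le> (\<integral>u. 2 * f x * exp (- (norm (u::'a))\<^sup>2) + L * s\<^sup>2 * ((norm u)\<^sup>2 * exp (- (norm u)\<^sup>2)) \<partial>lborel)"
  proof (rule integral_mono)
    show "integrable lborel (\<lambda>u::'a. 2 * f x * exp (- (norm u)\<^sup>2) + L * s\<^sup>2 * ((norm u)\<^sup>2 * exp (- (norm u)\<^sup>2)))"
      by (intro Bochner_Integration.integrable_add Bochner_Integration.integrable_mult_right gauss_int0 gauss_int2)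
    show "integrable lborel (\<lambda>u. (f (x + s *\<^sub>R u) + f (x - s *\<^sub>R u)) * exp (- (norm u)\<^sup>2))"
      unfolding distrib_right by (rule Bochner_Integration.integrable_add[OF integ' i2])
    fix u :: 'a
    have a: "\<bar>f (x + s *\<^sub>R u) - f x - g x \<bullet> (s *\<^sub>R u)\<bar> \<le> L / 2 * (norm (s *\<^sub>R u))\<^sup>2"
      by (rule descent[OF D Lip])
    have b: "\<bar>f (x + (- s) *\<^sub>R u) - f x - g x \<bullet> ((- s) *\<^sub>R u)\<bar> \<le> L / 2 * (norm ((- s) *\<^sub>R u))\<^sup>2"
      by (rule descent[OF D Lip])
    have n: "(norm (s *\<^sub>R u))\<^sup>2 = s\<^sup>2 * (norm u)\<^sup>2" "(norm ((- s) *\<^sub>R u))\<^sup>2 = s\<^sup>2 * (norm u)\<^sup>2"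
      by (simp_all add: power_mult_distrib)
    have "g x \<bullet> ((- s) *\<^sub>R u) = - (g x \<bullet> (s *\<^sub>R u))" by simp
    moreover have "x + (- s) *\<^sub>R u = x - s *\<^sub>R u" by simp
    ultimately have b': "\<bar>f (x - s *\<^sub>R u) - f x + g x \<bullet> (s *\<^sub>R u)\<bar> \<le> L / 2 * (s\<^sup>2 * (norm u)\<^sup>2)"
      using b unfolding n by simp
    have a': "\<bar>f (x + s *\<^sub>R u) - f x - g x \<bullet> (s *\<^sub>R u)\<bar> \<le> L / 2 * (s\<^sup>2 * (norm u)\<^sup>2)"
      using a unfolding n by simp
    have "f (x + s *\<^sub>R u) + f (x - s *\<^sub>R u) \<le> 2 * f x + L * s\<^sup>2 * (norm u)\<^sup>2"
      using a' b' unfolding abs_le_iff by linarith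
    then have m: "(f (x + s *\<^sub>R u) + f (x - s *\<^sub>R u)) * exp (- (norm u)\<^sup>2) \<le> (2 * f x + L * s\<^sup>2 * (norm u)\<^sup>2) * exp (- (norm u)\<^sup>2)"
      by (rule mult_right_mono) simp
    have e: "(2 * f x + L * s\<^sup>2 * (norm u)\<^sup>2) * exp (- (norm u)\<^sup>2) = 2 * f x * exp (- (norm u)\<^sup>2) + L * s\<^sup>2 * ((norm u)\<^sup>2 * exp (- (norm u)\<^sup>2))"
      by (simp only: distrib_right mult.assoc)
    show "(f (x + s *\<^sub>R u) + f (x - s *\<^sub>R u)) * exp (- (norm u)\<^sup>2) \<le> 2 * f x * exp (- (norm u)\<^sup>2) + L * s\<^sup>2 * ((norm u)\<^sup>2 * exp (- (norm u)\<^sup>2))"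
      using m e by linarith
  qed
  also have "\<dots> = 2 * (f x * (\<integral>u. exp (- (norm (u::'a))\<^sup>2) \<partial>lborel) + L / 2 * s\<^sup>2 * (\<integral>u. (norm (u::'a))\<^sup>2 * exp (- (norm u)\<^sup>2) \<partial>lborel))"
  proof -
    have "(\<integral>u. 2 * f x * exp (- (norm (u::'a))\<^sup>2) + L * s\<^sup>2 * ((norm u)\<^sup>2 * exp (- (norm u)\<^sup>2)) \<partial>lborel)
      = (\<integral>u. 2 * f x * exp (- (norm (u::'a))\<^sup>2) \<partial>lborel) + (\<integral>u. L * s\<^sup>2 * ((norm (u::'a))\<^sup>2 * exp (- (norm u)\<^sup>2)) \<partial>lborel)"
      by (intro Bochner_Integration.integral_add Bochner_Integration.integrable_mult_right gauss_int0 gauss_int2)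
    also have "\<dots> = 2 * f x * (\<integral>u. exp (- (norm (u::'a))\<^sup>2) \<partial>lborel) + L * s\<^sup>2 * (\<integral>u. (norm (u::'a))\<^sup>2 * exp (- (norm u)\<^sup>2) \<partial>lborel)"
      by (simp only: Bochner_Integration.integral_mult_right_zero)
    finally show ?thesis by (simp add: algebra_simps)
  qed
  finally show ?thesis by simp
qed

lemma S_convex: "convex_on UNIV (\<lambda>x. (\<integral>u. f (x + s *\<^sub>R u) * exp (- (norm u)\<^sup>2) \<partial>lborel))"
proof (rule convex_onI)
  fix t :: real and x y :: 'a assume t: "0 < t" "t < 1"
  have "(\<integral>u. f ((1 - t) *\<^sub>R x + t *\<^sub>R y + s *\<^sub>R u) * exp (- (norm u)\<^sup>2) \<partial>lborel)
     \<le> (\<integral>u. (1 - t) * (f (x + s *\<^sub>R u) * exp (- (norm u)\<^sup>2)) + t * (f (y + s *\<^sub>R u) * exp (- (norm u)\<^sup>2)) \<partial>lborel)"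
  proof (rule integral_mono)
    show "integrable lborel (\<lambda>u. f ((1 - t) *\<^sub>R x + t *\<^sub>R y + s *\<^sub>R u) * exp (- (norm u)\<^sup>2))" by (rule integ')
    show "integrable lborel (\<lambda>u. (1 - t) * (f (x + s *\<^sub>R u) * exp (- (norm u)\<^sup>2)) + t * (f (y + s *\<^sub>R u) * exp (- (norm u)\<^sup>2)))"
      by (intro Bochner_Integration.integrable_add Bochner_Integration.integrable_mult_right integ')
    fix u :: 'a
    have "f ((1 - t) *\<^sub>R (x + s *\<^sub>R u) + t *\<^sub>R (y + s *\<^sub>R u)) \<le> (1 - t) * f (x + s *\<^sub>R u) + t * f (y + s *\<^sub>R u)"
      by (rule convex_onD[OF cvx]) (use t in auto)
    moreover have "(1 - t) *\<^sub>R (x + s *\<^sub>R u) + t *\<^sub>R (y + s *\<^sub>R u) = (1 - t) *\<^sub>R x + t *\<^sub>R y + s *\<^sub>R u"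
      by (simp add: algebra_simps)
    ultimately have "f ((1 - t) *\<^sub>R x + t *\<^sub>R y + s *\<^sub>R u) \<le> (1 - t) * f (x + s *\<^sub>R u) + t * f (y + s *\<^sub>R u)" by simp
    then have m: "f ((1 - t) *\<^sub>R x + t *\<^sub>R y + s *\<^sub>R u) * exp (- (norm u)\<^sup>2) \<le> ((1 - t) * f (x + s *\<^sub>R u) + t * f (y + s *\<^sub>R u)) * exp (- (norm u)\<^sup>2)"
      by (rule mult_right_mono) simp
    have e: "((1 - t) * f (x + s *\<^sub>R u) + t * f (y + s *\<^sub>R u)) * exp (- (norm u)\<^sup>2) = (1 - t) * (f (x + s *\<^sub>R u) * exp (- (norm u)\<^sup>2)) + t * (f (y + s *\<^sub>R u) * exp (- (norm u)\<^sup>2))"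
      by (simp only: distrib_right mult.assoc)
    show "f ((1 - t) *\<^sub>R x + t *\<^sub>R y + s *\<^sub>R u) * exp (- (norm u)\<^sup>2) \<le> (1 - t) * (f (x + s *\<^sub>R u) * exp (- (norm u)\<^sup>2)) + t * (f (y + s *\<^sub>R u) * exp (- (norm u)\<^sup>2))"
      using m e by linarith
  qed
  also have "\<dots> = (1 - t) * (\<integral>u. f (x + s *\<^sub>R u) * exp (- (norm u)\<^sup>2) \<partial>lborel) + t * (\<integral>u. f (y + s *\<^sub>R u) * exp (- (norm u)\<^sup>2) \<partial>lborel)"
    by (subst Bochner_Integration.integral_add) (auto intro!: Bochner_Integration.integrable_mult_right integ')
  finally show "(\<integral>u. f ((1 - t) *\<^sub>R x + t *\<^sub>R y + s *\<^sub>R u) * exp (- (norm u)\<^sup>2) \<partial>lborel)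
     \<le> (1 - t) * (\<integral>u. f (x + s *\<^sub>R u) * exp (- (norm u)\<^sup>2) \<partial>lborel) + t * (\<integral>u. f (y + s *\<^sub>R u) * exp (- (norm u)\<^sup>2) \<partial>lborel)" .
qed simp

end

theorem corollary3p10:
  fixes f :: "'a::euclidean_space \<Rightarrow> real" and L :: real and xstar :: 'a
    and \<sigma> :: "nat \<Rightarrow> real"
  assumes "convex_on UNIV f"
    and "L > 0" and "L_smooth L f"
    and "is_minimizer f xstar" and "\<And>y. is_minimizer f y \<Longrightarrow> y = xstar"
    and "\<And>n. \<sigma> n \<ge> 0" and "\<sigma> \<longlonglongrightarrow> 0"
  shows "\<exists>N. (\<forall>n\<ge>N. \<exists>x. is_minimizer (gauss_smooth (\<sigma> n) f) x) \<and>
             (\<forall>xs :: nat \<Rightarrow> 'a. (\<forall>n\<ge>N. is_minimizer (gauss_smooth (\<sigma> n) f) (xs n))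
                 \<longrightarrow> xs \<longlonglongrightarrow> xstar)"
proof -
  note cvx = assms(1) and Lpos = assms(2) and mn = assms(4) and uq = assms(5) and sig = assms(7)
  obtain g where D: "\<And>x. (f has_derivative (\<lambda>h. g x \<bullet> h)) (at x)"
    and Lip: "\<And>x y. norm (g x - g y) \<le> L * norm (x - y)"
    using assms(3) unfolding L_smooth_def by blast
  define K0 where "K0 = pi powr (- real DIM('a) / 2)"
  define I0 where "I0 = (\<integral>u. exp (- (norm (u::'a))\<^sup>2) \<partial>lborel)"
  define I2 where "I2 = (\<integral>u. (norm (u::'a))\<^sup>2 * exp (- (norm u)\<^sup>2) \<partial>lborel)"
  define K where "K = K0 * I0"
  define C where "C = K0 * (L / 2 * I2)"
  define m where "m = f xstar"
  have K0pos: "K0 > 0" unfolding K0_def by simp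
  have Kpos: "K > 0" unfolding K_def I0_def using K0pos gauss_pos[where 'a='a] by (intro mult_pos_pos)
  have I2nn: "I2 \<ge> 0" unfolding I2_def by (intro Bochner_Integration.integral_nonneg) auto
  have Cnn: "C \<ge> 0" unfolding C_def using K0pos Lpos I2nn by simp
  have gs: "gauss_smooth s f x = K0 * (\<integral>u. f (x + s *\<^sub>R u) * exp (- (norm u)\<^sup>2) \<partial>lborel)" if "s \<noteq> 0" for s x
    using that unfolding gauss_smooth_def K0_def by simp
  have lowb: "K * f x \<le> gauss_smooth s f x" if "s \<noteq> 0" for s x
    using mult_left_mono[OF S_lower[OF D Lip Lpos cvx, of x s] less_imp_le[OF K0pos]]
    unfolding gs[OF that] K_def I0_def by (simp add: algebra_simps)
  have upb: "gauss_smooth s f x \<le> K * f x + C * s\<^sup>2" if "s \<noteq> 0" for s x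
    using mult_left_mono[OF S_upper[OF D Lip Lpos cvx, of x s] less_imp_le[OF K0pos]]
    unfolding gs[OF that] K_def I0_def C_def I2_def by (simp add: algebra_simps)
  have contg: "continuous_on UNIV (gauss_smooth s f)" if "s \<noteq> 0" for s
  proof -
    have "continuous_on UNIV (\<lambda>x. (\<integral>u. f (x + s *\<^sub>R u) * exp (- (norm u)\<^sup>2) \<partial>lborel))"
      by (rule convex_on_continuous[OF open_UNIV S_convex[OF D Lip Lpos cvx]])
    then have "continuous_on UNIV (\<lambda>x. K0 * (\<integral>u. f (x + s *\<^sub>R u) * exp (- (norm u)\<^sup>2) \<partial>lborel))"
      by (intro continuous_on_mult_left)
    moreover have "gauss_smooth s f = (\<lambda>x. K0 * (\<integral>u. f (x + s *\<^sub>R u) * exp (- (norm u)\<^sup>2) \<partial>lborel))"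
      using gs[OF that] by (rule ext)
    ultimately show ?thesis by simp
  qed
  have fcont: "continuous_on UNIV f" by (rule f_cont[OF D Lip Lpos cvx])
  have fmin: "m \<le> f x" for x using mn unfolding is_minimizer_def m_def by auto
  obtain d1 where d1: "d1 > 0" and gr1: "\<And>x. 1 \<le> norm (x - xstar) \<Longrightarrow> m + d1 * norm (x - xstar) / 1 \<le> f x"
    using growth[OF cvx fcont mn uq, of 1] unfolding m_def by auto
  have exist: "\<exists>x. is_minimizer (gauss_smooth s f) x" for s
  proof (cases "s = 0")
    case True
    then show ?thesis using mn unfolding gauss_smooth_def is_minimizer_def by auto
  next
    case False
    define R where "R = 1 + C * s\<^sup>2 / (K * d1)"
    have R1: "R \<ge> 1" unfolding R_def using Cnn Kpos d1 by simp
    have "\<exists>z\<in>cball xstar R. \<forall>y\<in>cball xstar R. gauss_smooth s f z \<le> gauss_smooth s f y"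
      using R1 by (intro continuous_attains_inf continuous_on_subset[OF contg[OF False]]) auto
    then obtain z where z: "z \<in> cball xstar R" and zmin: "\<And>y. y \<in> cball xstar R \<Longrightarrow> gauss_smooth s f z \<le> gauss_smooth s f y"
      by blast
    have "gauss_smooth s f z \<le> gauss_smooth s f y" for y
    proof (cases "y \<in> cball xstar R")
      case True then show ?thesis by (rule zmin)
    next
      case out: False
      then have r: "norm (y - xstar) > R" by (simp add: dist_norm norm_minus_commute)
      have "K * d1 * R \<le> K * d1 * norm (y - xstar)" using r Kpos d1 by simp
      moreover have "K * d1 * R = K * d1 + C * s\<^sup>2" unfolding R_def using Kpos d1 by (simp add: field_simps)
      moreover have "K * d1 > 0" using Kpos d1 by simp
      ultimately have "C * s\<^sup>2 \<le> K * d1 * norm (y - xstar)" by linarith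
      then have "C * s\<^sup>2 \<le> K * (d1 * norm (y - xstar))" by (simp add: mult.assoc)
      moreover have "K * (m + d1 * norm (y - xstar)) \<le> K * f y"
        using gr1[of y] r R1 Kpos by (intro mult_left_mono) auto
      ultimately have "K * m + C * s\<^sup>2 \<le> K * f y" by (simp add: algebra_simps)
      moreover have "gauss_smooth s f xstar \<le> K * m + C * s\<^sup>2" using upb[OF False] unfolding m_def by blast
      moreover have "gauss_smooth s f z \<le> gauss_smooth s f xstar" using zmin R1 by simp
      ultimately show ?thesis using lowb[OF False, of y] by linarith
    qed
    then show ?thesis unfolding is_minimizer_def by blast
  qed
  show ?thesis
  proof (rule exI[of _ 0], intro conjI)
    show "\<forall>n\<ge>0. \<exists>x. is_minimizer (gauss_smooth (\<sigma> n) f) x" using exist by blast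
  next
    show "\<forall>xs :: nat \<Rightarrow> 'a. (\<forall>n\<ge>0. is_minimizer (gauss_smooth (\<sigma> n) f) (xs n)) \<longrightarrow> xs \<longlonglongrightarrow> xstar"
    proof (intro allI impI)
    fix xs :: "nat \<Rightarrow> 'a" assume mins: "\<forall>n\<ge>0. is_minimizer (gauss_smooth (\<sigma> n) f) (xs n)"
    show "xs \<longlonglongrightarrow> xstar"
    proof (rule tendstoI)
      fix e :: real assume e: "e > 0"
      obtain d where d: "d > 0" and gr: "\<And>x. e \<le> norm (x - xstar) \<Longrightarrow> m + d * norm (x - xstar) / e \<le> f x"
        using growth[OF cvx fcont mn uq e] unfolding m_def by auto
      have "(\<lambda>n. C * (\<sigma> n)\<^sup>2) \<longlonglongrightarrow> C * 0\<^sup>2"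
        by (intro tendsto_intros sig)
      then have "eventually (\<lambda>n. C * (\<sigma> n)\<^sup>2 < K * d) sequentially"
        using Kpos d by (intro order_tendstoD(2)) auto
      then show "eventually (\<lambda>n. dist (xs n) xstar < e) sequentially"
      proof (rule eventually_mono)
        fix n assume small: "C * (\<sigma> n)\<^sup>2 < K * d"
        have mn': "is_minimizer (gauss_smooth (\<sigma> n) f) (xs n)" using mins by simp
        show "dist (xs n) xstar < e"
        proof (cases "\<sigma> n = 0")
          case True
          then have "is_minimizer f (xs n)" using mn' unfolding is_minimizer_def gauss_smooth_def by simp
          then show ?thesis using uq e by simp
        next
          case False
          have "K * f (xs n) \<le> gauss_smooth (\<sigma> n) f (xs n)" by (rule lowb[OF False])
          also have "\<dots> \<le> gauss_smooth (\<sigma> n) f xstar" using mn' unfolding is_minimizer_def by blast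
          also have "\<dots> \<le> K * m + C * (\<sigma> n)\<^sup>2" using upb[OF False] unfolding m_def by blast
          finally have "K * f (xs n) < K * (m + d)" using small by (simp add: algebra_simps)
          then have fl: "f (xs n) < m + d" using Kpos by simp
          show ?thesis
          proof (rule ccontr)
            assume "\<not> dist (xs n) xstar < e"
            then have en: "e \<le> norm (xs n - xstar)" by (simp add: dist_norm)
            then have "d \<le> d * norm (xs n - xstar) / e" using d e by (simp add: field_simps)
            then show False using gr[OF en] fl by linarith
          qed
        qed
      qed
    qed
  qed
  qed
qed

end
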